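(* Let $h>0$, $\alpha>2$, $p>0$, $\sigma^2>0$, and let $w_s,w_g:[0,\pi/2]\to[0,1]$ be continuous antenna patterns with $w_s(0)=w_g(0)=1$. For $\Delta>0$ and integers $i\equiv j\pmod 2$, let $\mathbf{s}^{\mathrm{reg}}_{i,j}=(i\Delta/2,\ j\Delta\sqrt3/2,\ h)$ (ground user at the origin), $\theta^{\mathrm{reg}}_{i,j}(\Delta)=\cos^{-1}\bigl(h/\|\mathbf{s}^{\mathrm{reg}}_{i,j}\|\bigr)$, $\mathcal{I}=\{(i,j)\in\mathbb{Z}^2: i\equiv j\ (\mathrm{mod}\ 2)\}\setminus\{(0,0)\}$, $$\gamma(p)=\frac{p}{\sigma^2}h^{-\alpha},\qquad \eta(p,\Delta)=\frac{p}{\sigma^2}\sum_{(i,j)\in\mathcal{I}}\|\mathbf{s}^{\mathrm{reg}}_{i,j}\|^{-\alpha}\,w_s\bigl(\theta^{\mathrm{reg}}_{i,j}(\Delta)\bigr)\,w_g\bigl(\theta^{\mathrm{reg}}_{i,j}(\Delta)\bigr),$$ and $$R^{\mathrm{reg}}(p,\Delta)=\frac{2}{\Delta^2\sqrt3}\log_2\!\left(1+\frac{\gamma(p)}{\eta(p,\Delta)+1}\right).$$ Then as $\Delta\to 0$, $R^{\mathrm{reg}}(p,\Delta)$ converges to a finite positive constant (depending on $p,\sigma^2,h,\alpha$ and the antenna patterns $w_s,w_g$).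
   Context: $R^{\mathrm{reg}}(p,\Delta)$ is the spectral efficiency (bits/s/Hz per unit area) of the regular configuration in the planar model: satellites on a hexagonal lattice with inter-satellite spacing $\Delta$ at altitude $h$, each serving a ground terminal directly below it, all antennas pointing vertically, all satellites transmitting at power spectral density $p$; $2/(\Delta^2\sqrt3)$ is the density of satellites per unit area. *)

theory Defs
  imports "HOL-Analysis.Analysis"
begin

definition sreg :: "real \<Rightarrow> real \<Rightarrow> int \<Rightarrow> int \<Rightarrow> real \<times> real \<times> real" where
  "sreg h \<Delta> i j = (real_of_int i * \<Delta> / 2, real_of_int j * \<Delta> * sqrt 3 / 2, h)"

definition norm3 :: "real \<times> real \<times> real \<Rightarrow> real" where
  "norm3 v = (case v of (x, y, z) \<Rightarrow> sqrt (x\<^sup>2 + y\<^sup>2 + z\<^sup>2))"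

definition theta_reg :: "real \<Rightarrow> real \<Rightarrow> int \<Rightarrow> int \<Rightarrow> real" where
  "theta_reg h \<Delta> i j = arccos (h / norm3 (sreg h \<Delta> i j))"

definition Iset :: "(int \<times> int) set" where
  "Iset = {(i, j). i mod 2 = j mod 2} - {(0, 0)}"

definition gamma_snr :: "real \<Rightarrow> real \<Rightarrow> real \<Rightarrow> real \<Rightarrow> real" where
  "gamma_snr \<sigma>2 h \<alpha> p = p / \<sigma>2 * h powr (- \<alpha>)"

definition eta_int ::
  "real \<Rightarrow> real \<Rightarrow> real \<Rightarrow> (real \<Rightarrow> real) \<Rightarrow> (real \<Rightarrow> real) \<Rightarrow> real \<Rightarrow> real \<Rightarrow> real" where
  "eta_int \<sigma>2 h \<alpha> ws wg p \<Delta> = p / \<sigma>2 *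
     (\<Sum>\<^sub>\<infinity>(i, j)\<in>Iset. norm3 (sreg h \<Delta> i j) powr (- \<alpha>)
         * ws (theta_reg h \<Delta> i j) * wg (theta_reg h \<Delta> i j))"

definition R_reg ::
  "real \<Rightarrow> real \<Rightarrow> real \<Rightarrow> (real \<Rightarrow> real) \<Rightarrow> (real \<Rightarrow> real) \<Rightarrow> real \<Rightarrow> real \<Rightarrow> real" where
  "R_reg \<sigma>2 h \<alpha> ws wg p \<Delta> = 2 / (\<Delta>\<^sup>2 * sqrt 3) *
     log 2 (1 + gamma_snr \<sigma>2 h \<alpha> p / (eta_int \<sigma>2 h \<alpha> ws wg p \<Delta> + 1))"

end

theory Submission
  imports Defs
begin


lemma floor2:
  fixes d :: real and g :: "int \<times> int \<Rightarrow> ennreal"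
  assumes d: "d > 0"
  shows "(\<integral>\<^sup>+x. g (\<lfloor>fst x / d\<rfloor>, \<lfloor>snd x / d\<rfloor>) \<partial>lborel)
         = ennreal (d^2) * (\<integral>\<^sup>+k. g k \<partial>count_space UNIV)"
proof -
  define Q where "Q = (\<lambda>x::real\<times>real. (\<lfloor>fst x / d\<rfloor>, \<lfloor>snd x / d\<rfloor>))"
  define C where "C = (\<lambda>k::int\<times>int. {real_of_int (fst k) * d ..< (real_of_int (fst k) + 1) * d}
        \<times> {real_of_int (snd k) * d ..< (real_of_int (snd k) + 1) * d})"
  have QC: "indicator {Q x} k = (indicator (C k) x :: ennreal)" for x k
  proof -
    have "Q x = k \<longleftrightarrow> x \<in> C k"
      using d unfolding Q_def C_def
      by (cases x; cases k) (auto simp: floor_eq_iff field_simps)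
    then show ?thesis by (auto split: split_indicator)
  qed
  have 1: "g (Q x) = (\<integral>\<^sup>+k. g k * indicator (C k) x \<partial>count_space UNIV)" for x
    by (simp add: QC[symmetric])
  interpret P: pair_sigma_finite "count_space (UNIV::(int\<times>int) set)" "lborel :: (real\<times>real) measure"
    by (intro pair_sigma_finite.intro sigma_finite_measure_count_space_countable sigma_finite_lborel) auto
  have Qm[measurable]: "Q \<in> borel \<rightarrow>\<^sub>M count_space UNIV"
  proof -
    have f1: "(\<lambda>x::real\<times>real. \<lfloor>fst x / d\<rfloor>) \<in> borel \<rightarrow>\<^sub>M count_space UNIV"
      by (rule measurable_compose[OF _ measurable_real_floor]) (intro borel_measurable_continuous_onI continuous_intros, use d in auto)
    have f2: "(\<lambda>x::real\<times>real. \<lfloor>snd x / d\<rfloor>) \<in> borel \<rightarrow>\<^sub>M count_space UNIV"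
      by (rule measurable_compose[OF _ measurable_real_floor]) (intro borel_measurable_continuous_onI continuous_intros, use d in auto)
    have "Q \<in> borel \<rightarrow>\<^sub>M (count_space UNIV \<Otimes>\<^sub>M count_space UNIV)"
      unfolding Q_def by (rule measurable_Pair[OF f1 f2])
    then show ?thesis by (simp add: pair_measure_countable)
  qed
  have mC: "(\<lambda>p. g (fst p) * indicator (C (fst p)) (snd p)) \<in> borel_measurable (count_space UNIV \<Otimes>\<^sub>M lborel)"
  proof -
    have "(\<lambda>p. g (fst p) * indicator (C (fst p)) (snd p)) = (\<lambda>p. g (fst p) * indicator {Q (snd p)} (fst p))"
      by (simp add: QC)
    also have "\<dots> = (\<lambda>p. g (fst p) * (if Q (snd p) = fst p then 1 else 0))"
      by (auto simp: fun_eq_iff split: split_indicator)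
    finally show ?thesis by simp
  qed
  have "(\<integral>\<^sup>+x. g (Q x) \<partial>lborel) = (\<integral>\<^sup>+x. (\<integral>\<^sup>+k. g k * indicator (C k) x \<partial>count_space UNIV) \<partial>lborel)"
    by (simp add: 1)
  also have "\<dots> = (\<integral>\<^sup>+k. (\<integral>\<^sup>+x. g k * indicator (C k) x \<partial>lborel) \<partial>count_space UNIV)"
    using P.Fubini[OF mC] by simp
  also have "\<dots> = (\<integral>\<^sup>+k. g k * ennreal (d^2) \<partial>count_space UNIV)"
  proof (rule nn_integral_cong)
    fix k :: "int \<times> int"
    have CS: "C k \<in> sets (lborel :: (real\<times>real) measure)" unfolding C_def
      by (simp flip: lborel_prod)
    have "emeasure (lborel :: (real\<times>real) measure) (C k) = ennreal (d^2)"
      unfolding C_def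
      apply (simp flip: lborel_prod)
      apply (subst sigma_finite_measure.emeasure_pair_measure_Times)
      using d by (auto simp: power2_eq_square algebra_simps ennreal_mult sigma_finite_lborel)
    then show "(\<integral>\<^sup>+x. g k * indicator (C k) x \<partial>lborel) = g k * ennreal (d^2)"
      using CS by (simp add: nn_integral_cmult_indicator)
  qed
  also have "\<dots> = ennreal (d^2) * (\<integral>\<^sup>+k. g k \<partial>count_space UNIV)"
    by (simp add: nn_integral_multc mult.commute)
  finally show ?thesis by (simp add: Q_def)
qed



definition clampc :: "real \<Rightarrow> real \<Rightarrow> real \<Rightarrow> real" where
  "clampc a b t = max a (min b t)"

definition Wc :: "(real \<Rightarrow> real) \<Rightarrow> (real \<Rightarrow> real) \<Rightarrow> real \<Rightarrow> real" where
  "Wc ws wg t = ws (clampc 0 (pi/2) (arccos (clampc (-1) 1 t))) * wg (clampc 0 (pi/2) (arccos (clampc (-1) 1 t)))"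

definition nq :: "real \<Rightarrow> real \<times> real \<Rightarrow> real" where
  "nq h x = norm3 (fst x + snd x / 2, snd x * sqrt 3 / 2, h)"

definition phi :: "real \<Rightarrow> real \<Rightarrow> (real \<Rightarrow> real) \<Rightarrow> (real \<Rightarrow> real) \<Rightarrow> real \<times> real \<Rightarrow> real" where
  "phi h \<alpha> ws wg x = nq h x powr (-\<alpha>) * Wc ws wg (h / nq h x)"

lemma clampc_cont: "continuous_on UNIV (clampc a b)"
  unfolding clampc_def by (intro continuous_intros)

lemma clampc_id: "a \<le> t \<Longrightarrow> t \<le> b \<Longrightarrow> clampc a b t = t"
  by (simp add: clampc_def)

lemma clampc_range: "a \<le> b \<Longrightarrow> clampc a b t \<in> {a..b}"
  by (simp add: clampc_def)

lemma Wc_cont: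
  assumes "continuous_on {0..pi/2} ws" "continuous_on {0..pi/2} wg"
  shows "continuous_on UNIV (Wc ws wg)"
proof -
  have c1: "continuous_on UNIV (\<lambda>t. arccos (clampc (-1) 1 t))"
    by (intro continuous_on_arccos clampc_cont) (auto simp: clampc_def)
  have c2: "continuous_on UNIV (\<lambda>t. clampc 0 (pi/2) (arccos (clampc (-1) 1 t)))"
    using continuous_on_compose[OF c1 continuous_on_subset[OF clampc_cont[of 0 "pi/2"]]]
    by (simp add: comp_def)
  have r: "(\<lambda>t. clampc 0 (pi/2) (arccos (clampc (-1) 1 t))) ` UNIV \<subseteq> {0..pi/2}"
    using clampc_range[of 0 "pi/2"] by auto
  have "continuous_on UNIV (\<lambda>t. ws (clampc 0 (pi/2) (arccos (clampc (-1) 1 t))))"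
    by (rule continuous_on_compose2[OF assms(1) c2 r])
  moreover have "continuous_on UNIV (\<lambda>t. wg (clampc 0 (pi/2) (arccos (clampc (-1) 1 t))))"
    by (rule continuous_on_compose2[OF assms(2) c2 r])
  ultimately show ?thesis unfolding Wc_def by (intro continuous_intros)
qed

lemma Wc_bounds:
  assumes "\<forall>t\<in>{0..pi/2}. 0 \<le> ws t \<and> ws t \<le> 1" "\<forall>t\<in>{0..pi/2}. 0 \<le> wg t \<and> wg t \<le> 1"
  shows "0 \<le> Wc ws wg t \<and> Wc ws wg t \<le> 1"
proof -
  define s where "s = clampc 0 (pi/2) (arccos (clampc (-1) 1 t))"
  have "s \<in> {0..pi/2}" unfolding s_def by (rule clampc_range) simp
  then have "0 \<le> ws s" "ws s \<le> 1" "0 \<le> wg s" "wg s \<le> 1" using assms by auto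
  then show ?thesis unfolding Wc_def s_def[symmetric] by (simp add: mult_le_one)
qed

lemma Wc_1: "ws 0 = 1 \<Longrightarrow> wg 0 = 1 \<Longrightarrow> Wc ws wg 1 = 1"
  by (simp add: Wc_def clampc_def)

lemma nq_eq: "nq h x = sqrt (fst x ^ 2 + fst x * snd x + snd x ^ 2 + h ^ 2)"
proof -
  have "(fst x + snd x / 2)\<^sup>2 + (snd x * sqrt 3 / 2)\<^sup>2 + h\<^sup>2 = fst x ^ 2 + fst x * snd x + snd x ^ 2 + h ^ 2"
    by (simp add: power2_eq_square algebra_simps)
  then show ?thesis by (simp add: nq_def norm3_def)
qed

lemma nq_ge: "h > 0 \<Longrightarrow> nq h x \<ge> h"
proof -
  assume h: "h > 0"
  have "(fst x + snd x / 2)\<^sup>2 + (snd x * sqrt 3 / 2)\<^sup>2 + h\<^sup>2 \<ge> h\<^sup>2" by simp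
  then have "sqrt ((fst x + snd x / 2)\<^sup>2 + (snd x * sqrt 3 / 2)\<^sup>2 + h\<^sup>2) \<ge> sqrt (h^2)"
    using real_sqrt_le_mono by blast
  then show ?thesis using h by (simp add: nq_def norm3_def)
qed

lemma nq_cont: "continuous_on UNIV (nq h)"
  unfolding nq_def norm3_def by (simp, intro continuous_intros) auto

lemma phi_cont:
  assumes "h > 0" "continuous_on {0..pi/2} ws" "continuous_on {0..pi/2} wg"
  shows "continuous_on UNIV (phi h \<alpha> ws wg)"
proof -
  have pos: "\<forall>x\<in>UNIV. nq h x \<noteq> 0" using nq_ge[OF assms(1)] assms(1) by (metis less_le_trans order_less_irrefl)
  have ch: "continuous_on UNIV (\<lambda>x. h / nq h x)"
    using pos by (intro continuous_intros nq_cont) auto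
  have "continuous_on UNIV (\<lambda>x. Wc ws wg (h / nq h x))"
    using continuous_on_compose2[OF Wc_cont[OF assms(2,3)] ch] by simp
  then show ?thesis unfolding phi_def using pos
    by (intro continuous_intros nq_cont) auto
qed

lemma phi_bounds:
  assumes h: "h > 0" and a: "\<alpha> > 0"
    and "\<forall>t\<in>{0..pi/2}. 0 \<le> ws t \<and> ws t \<le> 1" "\<forall>t\<in>{0..pi/2}. 0 \<le> wg t \<and> wg t \<le> 1"
  shows "0 \<le> phi h \<alpha> ws wg x \<and> phi h \<alpha> ws wg x \<le> ((fst x ^ 2 + snd x ^ 2) / 2 + h ^ 2) powr (-\<alpha>/2)"
proof -
  have W: "0 \<le> Wc ws wg (h / nq h x)" "Wc ws wg (h / nq h x) \<le> 1" using Wc_bounds[OF assms(3,4)] by auto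
  have np: "nq h x > 0" using nq_ge[OF h, of x] h by linarith
  have q: "(fst x ^ 2 + snd x ^ 2) / 2 + h ^ 2 \<le> fst x ^ 2 + fst x * snd x + snd x ^ 2 + h ^ 2"
  proof -
    have "0 \<le> (fst x + snd x)^2 / 2" by simp
    then show ?thesis by (simp add: power2_eq_square algebra_simps)
  qed
  have qp: "0 < (fst x ^ 2 + snd x ^ 2) / 2 + h ^ 2" using h by (simp add: add_nonneg_pos)
  have "nq h x powr (-\<alpha>) = (fst x ^ 2 + fst x * snd x + snd x ^ 2 + h ^ 2) powr (-\<alpha>/2)"
  proof -
    have nn: "0 \<le> fst x ^ 2 + fst x * snd x + snd x ^ 2 + h ^ 2" using q qp by linarith
    have "nq h x powr (-\<alpha>) = ((fst x ^ 2 + fst x * snd x + snd x ^ 2 + h ^ 2) powr (1/2)) powr (-\<alpha>)"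
      by (simp add: nq_eq powr_half_sqrt nn)
    also have "\<dots> = (fst x ^ 2 + fst x * snd x + snd x ^ 2 + h ^ 2) powr (-\<alpha>/2)"
      by (simp add: powr_powr)
    finally show ?thesis .
  qed
  also have "\<dots> \<le> ((fst x ^ 2 + snd x ^ 2) / 2 + h ^ 2) powr (-\<alpha>/2)"
    using q qp a by (intro powr_mono2') auto
  finally have le: "nq h x powr (-\<alpha>) \<le> ((fst x ^ 2 + snd x ^ 2) / 2 + h ^ 2) powr (-\<alpha>/2)" .
  have "phi h \<alpha> ws wg x \<le> nq h x powr (-\<alpha>)"
    unfolding phi_def using W by (simp add: mult_left_le)
  then show ?thesis using le W unfolding phi_def by simp
qed

lemma phi_0:
  assumes h: "h > 0" "ws 0 = 1" "wg 0 = 1"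
  shows "phi h \<alpha> ws wg (0,0) = h powr (-\<alpha>)"
proof -
  have "nq h (0,0) = h" using h by (simp add: nq_eq)
  then show ?thesis using h by (simp add: phi_def Wc_1)
qed



definition G1 :: "real \<Rightarrow> real \<Rightarrow> real \<Rightarrow> real" where
  "G1 h \<alpha> t = (if \<bar>t\<bar> \<le> 2 then (h^2/2) powr (-\<alpha>/4) else 8 powr (\<alpha>/4) * \<bar>t\<bar> powr (-\<alpha>/2))"

lemma G1_meas: "G1 h \<alpha> \<in> borel_measurable borel"
  unfolding G1_def by measurable

lemma G1_nonneg: "0 \<le> G1 h \<alpha> t" unfolding G1_def by auto

lemma tail_int:
  assumes a: "\<alpha> > 2"
  shows "(\<integral>\<^sup>+t. ennreal (t powr (-\<alpha>/2)) * indicator {2..} t \<partial>lborel) < \<infinity>"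
proof -
  have "((\<lambda>t. t powr (-\<alpha>/2)) has_integral -((2::real) powr (-\<alpha>/2+1)) / (-\<alpha>/2+1)) {2..}"
    using a by (intro has_integral_powr_to_inf) auto
  then have "(\<integral>\<^sup>+t. ennreal (t powr (-\<alpha>/2)) * indicator {2..} t \<partial>lborel) = ennreal (-((2::real) powr (-\<alpha>/2+1)) / (-\<alpha>/2+1))"
    by (intro nn_integral_has_integral_lebesgue') auto
  then show ?thesis by simp
qed

lemma G1_int:
  assumes a: "\<alpha> > 2"
  shows "(\<integral>\<^sup>+t. ennreal (G1 h \<alpha> t) \<partial>lborel) < \<infinity>"
proof -
  define K where "K = (h^2/2) powr (-\<alpha>/4)"
  define C where "C = 8 powr (\<alpha>/4)"
  define f where "f = (\<lambda>t::real. ennreal (\<bar>t\<bar> powr (-\<alpha>/2)) * indicator {2..} t)"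
  define f' where "f' = (\<lambda>t::real. ennreal (\<bar>t\<bar> powr (-\<alpha>/2)) * indicator {..-2} t)"
  have fm: "f \<in> borel_measurable borel" "f' \<in> borel_measurable borel" unfolding f_def f'_def by measurable
  have If: "integral\<^sup>N lborel f < \<infinity>"
  proof -
    have "integral\<^sup>N lborel f = (\<integral>\<^sup>+t. ennreal (t powr (-\<alpha>/2)) * indicator {2..} t \<partial>lborel)"
      unfolding f_def by (intro nn_integral_cong) (auto split: split_indicator)
    then show ?thesis using tail_int[OF a] by simp
  qed
  have If': "integral\<^sup>N lborel f' = integral\<^sup>N lborel f"
  proof -
    have "integral\<^sup>N lborel f' = ennreal \<bar>-1\<bar> * (\<integral>\<^sup>+x. f' (0 + (-1) * x) \<partial>lborel)"
      by (rule nn_integral_real_affine[OF fm(2)]) simp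
    also have "\<dots> = integral\<^sup>N lborel f"
    proof -
      have "f' (0 + (-1) * x) = f x" for x by (simp add: f_def f'_def indicator_def)
      then show ?thesis by simp
    qed
    finally show ?thesis .
  qed
  have le: "ennreal (G1 h \<alpha> t) \<le> ennreal K * indicator {-2..2} t + ennreal C * f t + ennreal C * f' t" for t
  proof (cases "\<bar>t\<bar> \<le> 2")
    case True
    then have "ennreal (G1 h \<alpha> t) = ennreal K * indicator {-2..2} t"
      by (simp add: G1_def K_def indicator_def abs_le_iff)
    then show ?thesis by (simp add: add.assoc)
  next
    case False
    have e: "ennreal (G1 h \<alpha> t) = ennreal C * ennreal (\<bar>t\<bar> powr (-\<alpha>/2))"
      using False by (simp add: G1_def C_def ennreal_mult)
    show ?thesis
    proof (cases "t > 0")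
      case True
      then have "f t = ennreal (\<bar>t\<bar> powr (-\<alpha>/2))" using False by (simp add: f_def indicator_def)
      then have "ennreal (G1 h \<alpha> t) = ennreal C * f t" using e by simp
      then show ?thesis by (metis add.commute add_increasing2 le_iff_add zero_le)
    next
      case False': False
      then have "f' t = ennreal (\<bar>t\<bar> powr (-\<alpha>/2))" using False by (simp add: f'_def indicator_def)
      then have "ennreal (G1 h \<alpha> t) = ennreal C * f' t" using e by simp
      then show ?thesis by simp
    qed
  qed
  have "(\<integral>\<^sup>+t. ennreal (G1 h \<alpha> t) \<partial>lborel) \<le> (\<integral>\<^sup>+t. ennreal K * indicator {-2..2} t + ennreal C * f t + ennreal C * f' t \<partial>lborel)"
    by (intro nn_integral_mono le)
  also have "\<dots> = ennreal K * emeasure lborel {-2..2::real} + ennreal C * integral\<^sup>N lborel f + ennreal C * integral\<^sup>N lborel f'"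
    using fm by (simp add: nn_integral_add nn_integral_cmult)
  also have "\<dots> < \<infinity>" using If If'
    by (simp add: ennreal_mult_less_top less_top[symmetric] ennreal_mult_eq_top_iff)
  finally show ?thesis .
qed

lemma G2_int:
  assumes a: "\<alpha> > 2"
  shows "integrable lborel (\<lambda>x::real\<times>real. G1 h \<alpha> (fst x) * G1 h \<alpha> (snd x))"
proof (rule integrableI_nonneg)
  show "(\<lambda>x::real\<times>real. G1 h \<alpha> (fst x) * G1 h \<alpha> (snd x)) \<in> borel_measurable lborel"
    using G1_meas by (simp flip: lborel_prod) measurable
  show "AE x in lborel. 0 \<le> G1 h \<alpha> (fst x) * G1 h \<alpha> (snd x)" by (simp add: G1_nonneg)
  have "(\<integral>\<^sup>+x. ennreal (G1 h \<alpha> (fst x) * G1 h \<alpha> (snd x)) \<partial>(lborel::(real\<times>real) measure))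
      = (\<integral>\<^sup>+x. ennreal (G1 h \<alpha> (fst x) * G1 h \<alpha> (snd x)) \<partial>(lborel \<Otimes>\<^sub>M lborel))"
    by (simp add: lborel_prod)
  also have "\<dots> = (\<integral>\<^sup>+x. (\<integral>\<^sup>+y. ennreal (G1 h \<alpha> x) * ennreal (G1 h \<alpha> y) \<partial>lborel) \<partial>lborel)"
  proof -
    have m: "(\<lambda>x. ennreal (G1 h \<alpha> (fst x) * G1 h \<alpha> (snd x))) \<in> borel_measurable (lborel \<Otimes>\<^sub>M lborel)"
      using G1_meas[measurable] by measurable
    interpret P: pair_sigma_finite "lborel::real measure" "lborel::real measure"
      by (intro pair_sigma_finite.intro sigma_finite_lborel)
    show ?thesis using sigma_finite_measure.nn_integral_fst[OF sigma_finite_lborel m, symmetric] by (simp add: ennreal_mult G1_nonneg)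
  qed
  also have "\<dots> = (\<integral>\<^sup>+x. ennreal (G1 h \<alpha> x) \<partial>lborel) * (\<integral>\<^sup>+y. ennreal (G1 h \<alpha> y) \<partial>lborel)"
    using G1_meas by (simp add: nn_integral_cmult nn_integral_multc)
  also have "\<dots> < \<infinity>" using G1_int[OF a] by (simp add: ennreal_mult_less_top)
  finally show "(\<integral>\<^sup>+x. ennreal (G1 h \<alpha> (fst x) * G1 h \<alpha> (snd x)) \<partial>lborel) < \<infinity>" .
qed



definition phid :: "real \<Rightarrow> real \<Rightarrow> (real \<Rightarrow> real) \<Rightarrow> (real \<Rightarrow> real) \<Rightarrow> real \<Rightarrow> real \<times> real \<Rightarrow> real" where
  "phid h \<alpha> ws wg d x = (if (\<lfloor>fst x / d\<rfloor>, \<lfloor>snd x / d\<rfloor>) = (0,0) then 0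
      else phi h \<alpha> ws wg (d * \<lfloor>fst x / d\<rfloor>, d * \<lfloor>snd x / d\<rfloor>))"

lemma fl_bounds:
  fixes x d :: real
  assumes d: "0 < d" shows "x - d < d * \<lfloor>x / d\<rfloor> \<and> d * \<lfloor>x / d\<rfloor> \<le> x"
proof -
  have "real_of_int \<lfloor>x / d\<rfloor> \<le> x / d" "x / d < real_of_int \<lfloor>x / d\<rfloor> + 1" by linarith+
  then have "d * real_of_int \<lfloor>x / d\<rfloor> \<le> d * (x / d)" "d * (x / d) < d * (real_of_int \<lfloor>x / d\<rfloor> + 1)"
    using d by (simp_all only: mult_left_mono mult_strict_left_mono less_imp_le)
  moreover have "d * (x / d) = x" using d by simp
  moreover have "d * (real_of_int \<lfloor>x / d\<rfloor> + 1) = d * real_of_int \<lfloor>x / d\<rfloor> + d" by (simp add: algebra_simps)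
  ultimately show ?thesis by linarith
qed

lemma fl_abs:
  fixes x d :: real
  assumes d: "0 < d" "d \<le> 1" shows "max 0 (\<bar>x\<bar> - 1) \<le> \<bar>d * \<lfloor>x / d\<rfloor>\<bar>"
  using fl_bounds[OF d(1), of x] d by (auto simp: abs_if max_def split: if_splits)

lemma pow_split:
  fixes P Q a :: real
  assumes "P > 0" "Q > 0" "a \<ge> 0"
  shows "(P + Q) powr (-a) \<le> P powr (-a/2) * Q powr (-a/2)"
proof -
  have s: "sqrt (P * Q) \<le> P + Q"
  proof -
    have "sqrt (P * Q) \<le> max P Q"
    proof -
      have "P * Q \<le> (max P Q)^2" using assms
        by (auto simp: max_def power2_eq_square intro: mult_mono)
      then show ?thesis using assms
        by (metis abs_of_pos less_max_iff_disj real_sqrt_abs real_sqrt_le_mono)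
    qed
    then show ?thesis using assms by linarith
  qed
  have sp: "sqrt (P * Q) > 0" using assms by simp
  have "(P + Q) powr (-a) \<le> sqrt (P * Q) powr (-a)"
    using s sp assms by (intro powr_mono2') auto
  also have "\<dots> = ((P * Q) powr (1/2)) powr (-a)" using assms by (simp add: powr_half_sqrt)
  also have "\<dots> = (P * Q) powr (-a/2)" by (simp add: powr_powr)
  also have "\<dots> = P powr (-a/2) * Q powr (-a/2)" using assms by (simp add: powr_mult)
  finally show ?thesis .
qed

lemma Pbound:
  assumes h: "h > 0" and a: "\<alpha> > 0"
  shows "((max 0 (\<bar>t\<bar> - 1))^2/2 + h^2/2) powr (-\<alpha>/4) \<le> G1 h \<alpha> t"
proof (cases "\<bar>t\<bar> \<le> 2")
  case True
  have "((max 0 (\<bar>t\<bar> - 1))^2/2 + h^2/2) powr (-\<alpha>/4) \<le> (h^2/2) powr (-\<alpha>/4)"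
    using h a by (intro powr_mono2') auto
  then show ?thesis using True by (simp add: G1_def)
next
  case False
  have m: "max 0 (\<bar>t\<bar> - 1) = \<bar>t\<bar> - 1" using False by simp
  have "t^2/8 \<le> (\<bar>t\<bar> - 1)^2/2"
  proof -
    have "\<bar>t\<bar>/2 \<le> \<bar>t\<bar> - 1" using False by simp
    then have "(\<bar>t\<bar>/2)^2 \<le> (\<bar>t\<bar> - 1)^2" by (intro power_mono) auto
    then show ?thesis by (simp add: power2_eq_square field_simps)
  qed
  moreover have "0 \<le> h^2/2" by simp
  ultimately have le: "t^2/8 \<le> (max 0 (\<bar>t\<bar> - 1))^2/2 + h^2/2" using m by linarith
  have tp: "t^2/8 > 0" using False by auto
  have "((max 0 (\<bar>t\<bar> - 1))^2/2 + h^2/2) powr (-\<alpha>/4) \<le> (t^2/8) powr (-\<alpha>/4)"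
    using le tp a by (intro powr_mono2') auto
  also have "\<dots> = (\<bar>t\<bar>^2) powr (-\<alpha>/4) / 8 powr (-\<alpha>/4)"
    by (simp add: powr_divide)
  also have "\<dots> = 8 powr (\<alpha>/4) * \<bar>t\<bar> powr (-\<alpha>/2)"
  proof -
    have "(\<bar>t\<bar>^2) powr (-\<alpha>/4) = \<bar>t\<bar> powr (-\<alpha>/2)"
    proof -
      have "(\<bar>t\<bar>^2) = \<bar>t\<bar> powr 2" using False by (simp add: powr_realpow)
      moreover have "(\<bar>t\<bar> powr 2) powr (-\<alpha>/4) = \<bar>t\<bar> powr (2 * (-\<alpha>/4))" by (rule powr_powr)
      ultimately show ?thesis by simp
    qed
    moreover have "inverse (8 powr (-\<alpha>/4)) = 8 powr (\<alpha>/4)" by (simp add: powr_minus)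
    ultimately show ?thesis by (simp only: divide_inverse mult.commute)
  qed
  finally show ?thesis using False by (simp add: G1_def)
qed

lemma dom_bound:
  assumes h: "h > 0" and a: "\<alpha> > 0"
    and ws: "\<forall>t\<in>{0..pi/2}. 0 \<le> ws t \<and> ws t \<le> 1" and wg: "\<forall>t\<in>{0..pi/2}. 0 \<le> wg t \<and> wg t \<le> 1"
    and d: "0 < d" "d \<le> 1"
  shows "0 \<le> phid h \<alpha> ws wg d x \<and> phid h \<alpha> ws wg d x \<le> G1 h \<alpha> (fst x) * G1 h \<alpha> (snd x)"
proof -
  define y1 where "y1 = d * \<lfloor>fst x / d\<rfloor>"
  define y2 where "y2 = d * \<lfloor>snd x / d\<rfloor>"
  define m1 where "m1 = max 0 (\<bar>fst x\<bar> - 1)"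
  define m2 where "m2 = max 0 (\<bar>snd x\<bar> - 1)"
  define P where "P = m1^2/2 + h^2/2"
  define Q where "Q = m2^2/2 + h^2/2"
  have Pp: "P > 0" "Q > 0" using h by (simp_all add: P_def Q_def add_nonneg_pos)
  have m1: "m1^2 \<le> y1^2"
  proof -
    have "0 \<le> m1" "m1 \<le> \<bar>y1\<bar>" unfolding m1_def y1_def using fl_abs[OF d, of "fst x"] by auto
    then have "m1^2 \<le> \<bar>y1\<bar>^2" by (intro power_mono) auto
    then show ?thesis by simp
  qed
  have m2: "m2^2 \<le> y2^2"
  proof -
    have "0 \<le> m2" "m2 \<le> \<bar>y2\<bar>" unfolding m2_def y2_def using fl_abs[OF d, of "snd x"] by auto
    then have "m2^2 \<le> \<bar>y2\<bar>^2" by (intro power_mono) auto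
    then show ?thesis by simp
  qed
  have pb: "0 \<le> phi h \<alpha> ws wg (y1, y2) \<and> phi h \<alpha> ws wg (y1, y2) \<le> ((y1^2 + y2^2)/2 + h^2) powr (-\<alpha>/2)"
    using phi_bounds[OF h a ws wg, of "(y1, y2)"] by simp
  have "((y1^2 + y2^2)/2 + h^2) powr (-\<alpha>/2) \<le> (P + Q) powr (-\<alpha>/2)"
    using m1 m2 Pp a unfolding P_def Q_def by (intro powr_mono2') (auto simp: field_simps)
  also have "\<dots> \<le> P powr (-\<alpha>/4) * Q powr (-\<alpha>/4)"
    using pow_split[OF Pp, of "\<alpha>/2"] a by simp
  also have "\<dots> \<le> G1 h \<alpha> (fst x) * G1 h \<alpha> (snd x)"
    using Pbound[OF h a] unfolding P_def Q_def m1_def m2_def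
    by (intro mult_mono) (auto simp: G1_nonneg)
  finally have "phi h \<alpha> ws wg (y1, y2) \<le> G1 h \<alpha> (fst x) * G1 h \<alpha> (snd x)" using pb by linarith
  moreover have "0 \<le> G1 h \<alpha> (fst x) * G1 h \<alpha> (snd x)" by (simp add: G1_nonneg)
  moreover have "phid h \<alpha> ws wg d x = (if (\<lfloor>fst x / d\<rfloor>, \<lfloor>snd x / d\<rfloor>) = (0,0) then 0 else phi h \<alpha> ws wg (y1, y2))"
    unfolding phid_def y1_def y2_def by (rule refl)
  ultimately show ?thesis using pb by (simp only: split: if_split) simp
qed



lemma Q_meas:
  fixes d :: real assumes d: "d > 0"
  shows "(\<lambda>x::real\<times>real. (\<lfloor>fst x / d\<rfloor>, \<lfloor>snd x / d\<rfloor>)) \<in> borel \<rightarrow>\<^sub>M count_space UNIV"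
proof -
  have f1: "(\<lambda>x::real\<times>real. \<lfloor>fst x / d\<rfloor>) \<in> borel \<rightarrow>\<^sub>M count_space UNIV"
    by (rule measurable_compose[OF _ measurable_real_floor]) (intro borel_measurable_continuous_onI continuous_intros, use d in auto)
  have f2: "(\<lambda>x::real\<times>real. \<lfloor>snd x / d\<rfloor>) \<in> borel \<rightarrow>\<^sub>M count_space UNIV"
    by (rule measurable_compose[OF _ measurable_real_floor]) (intro borel_measurable_continuous_onI continuous_intros, use d in auto)
  have "(\<lambda>x::real\<times>real. (\<lfloor>fst x / d\<rfloor>, \<lfloor>snd x / d\<rfloor>)) \<in> borel \<rightarrow>\<^sub>M (count_space UNIV \<Otimes>\<^sub>M count_space UNIV)"
    by (rule measurable_Pair[OF f1 f2])
  then show ?thesis by (simp add: pair_measure_countable)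
qed

definition chi :: "real \<Rightarrow> real \<Rightarrow> (real \<Rightarrow> real) \<Rightarrow> (real \<Rightarrow> real) \<Rightarrow> real \<Rightarrow> int \<times> int \<Rightarrow> real" where
  "chi h \<alpha> ws wg d k = (if k = (0,0) then 0 else phi h \<alpha> ws wg (d * fst k, d * snd k))"

lemma phid_chi: "phid h \<alpha> ws wg d x = chi h \<alpha> ws wg d (\<lfloor>fst x / d\<rfloor>, \<lfloor>snd x / d\<rfloor>)"
  by (simp add: phid_def chi_def)

lemma phid_meas:
  assumes d: "d > 0" shows "phid h \<alpha> ws wg d \<in> borel_measurable (lborel :: (real\<times>real) measure)"
proof -
  have "(\<lambda>x. chi h \<alpha> ws wg d (\<lfloor>fst x / d\<rfloor>, \<lfloor>snd x / d\<rfloor>)) \<in> borel_measurable (borel :: (real\<times>real) measure)"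
    by (rule measurable_compose[OF Q_meas[OF d]]) simp
  then show ?thesis by (simp add: phid_chi[abs_def])
qed

lemma phid_int:
  assumes h: "h > 0" and a: "\<alpha> > 2"
    and ws: "\<forall>t\<in>{0..pi/2}. 0 \<le> ws t \<and> ws t \<le> 1" and wg: "\<forall>t\<in>{0..pi/2}. 0 \<le> wg t \<and> wg t \<le> 1"
    and d: "0 < d" "d \<le> 1"
  shows "integrable lborel (phid h \<alpha> ws wg d)"
proof (rule Bochner_Integration.integrable_bound[OF G2_int[OF a, of h]])
  show "phid h \<alpha> ws wg d \<in> borel_measurable lborel" by (rule phid_meas[OF d(1)])
  show "AE x in lborel. norm (phid h \<alpha> ws wg d x) \<le> norm (G1 h \<alpha> (fst x) * G1 h \<alpha> (snd x))"
    using dom_bound[OF h _ ws wg d] a by (auto simp: G1_nonneg)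
qed

lemma sum_identity:
  assumes h: "h > 0" and a: "\<alpha> > 2"
    and ws: "\<forall>t\<in>{0..pi/2}. 0 \<le> ws t \<and> ws t \<le> 1" and wg: "\<forall>t\<in>{0..pi/2}. 0 \<le> wg t \<and> wg t \<le> 1"
    and d: "0 < d" "d \<le> 1"
  shows "integral\<^sup>L lborel (phid h \<alpha> ws wg d) = d^2 * infsum (chi h \<alpha> ws wg d) UNIV"
proof -
  let ?c = "chi h \<alpha> ws wg d"
  have cnn: "0 \<le> ?c k" for k
    using phi_bounds[OF h _ ws wg] a by (simp add: chi_def)
  have pnn: "0 \<le> phid h \<alpha> ws wg d x" for x using dom_bound[OF h _ ws wg d] a by auto
  have int: "integrable lborel (phid h \<alpha> ws wg d)" by (rule phid_int[OF h a ws wg d])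
  have "ennreal (integral\<^sup>L lborel (phid h \<alpha> ws wg d)) = (\<integral>\<^sup>+x. ennreal (phid h \<alpha> ws wg d x) \<partial>lborel)"
    using int pnn by (simp add: nn_integral_eq_integral)
  also have "\<dots> = ennreal (d^2) * (\<integral>\<^sup>+k. ennreal (?c k) \<partial>count_space UNIV)"
    unfolding phid_chi by (rule floor2[OF d(1)])
  finally have eq: "ennreal (integral\<^sup>L lborel (phid h \<alpha> ws wg d)) = ennreal (d^2) * (\<integral>\<^sup>+k. ennreal (?c k) \<partial>count_space UNIV)" .
  have fin: "(\<integral>\<^sup>+k. ennreal (?c k) \<partial>count_space UNIV) < \<infinity>"
  proof -
    have "ennreal (d^2) * (\<integral>\<^sup>+k. ennreal (?c k) \<partial>count_space UNIV) < \<infinity>"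
      unfolding eq[symmetric] by simp
    then show ?thesis using d by (auto simp: ennreal_mult_less_top)
  qed
  have ci: "integrable (count_space UNIV) ?c"
    using fin cnn by (intro integrableI_nonneg) auto
  have "infsum ?c UNIV = infsetsum ?c UNIV"
    using ci by (simp add: infsetsum_infsum abs_summable_on_def)
  also have "\<dots> = integral\<^sup>L (count_space UNIV) ?c" by (simp add: infsetsum_def)
  finally have si: "infsum ?c UNIV = integral\<^sup>L (count_space UNIV) ?c" .
  have "ennreal (integral\<^sup>L (count_space UNIV) ?c) = (\<integral>\<^sup>+k. ennreal (?c k) \<partial>count_space UNIV)"
    using ci cnn by (simp add: nn_integral_eq_integral)
  with si have X: "(\<integral>\<^sup>+k. ennreal (?c k) \<partial>count_space UNIV) = ennreal (infsum ?c UNIV)" by simp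
  have J: "0 \<le> infsum ?c UNIV" using cnn by (simp add: infsum_nonneg)
  have "ennreal (integral\<^sup>L lborel (phid h \<alpha> ws wg d)) = ennreal (d^2) * ennreal (infsum ?c UNIV)"
    using eq X by simp
  also have "\<dots> = ennreal (d^2 * infsum ?c UNIV)" using J by (simp add: ennreal_mult)
  finally have "ennreal (integral\<^sup>L lborel (phid h \<alpha> ws wg d)) = ennreal (d^2 * infsum ?c UNIV)" .
  moreover have "0 \<le> integral\<^sup>L lborel (phid h \<alpha> ws wg d)" using pnn by simp
  moreover have "0 \<le> d^2 * infsum ?c UNIV" using cnn by (simp add: infsum_nonneg)
  ultimately show ?thesis by simp
qed



lemma Wc_eq:
  assumes "0 \<le> y" "y \<le> 1"
  shows "Wc ws wg y = ws (arccos y) * wg (arccos y)"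
proof -
  have "clampc (-1) 1 y = y" using assms by (simp add: clampc_id)
  moreover have "clampc 0 (pi/2) (arccos y) = arccos y"
    using assms by (intro clampc_id arccos_lbound arccos_le_pi2) auto
  ultimately show ?thesis by (simp add: Wc_def)
qed

lemma summand_eq:
  fixes m n :: int
  assumes h: "h > 0"
  shows "norm3 (sreg h d (2*m+n) n) powr (-\<alpha>) * ws (theta_reg h d (2*m+n) n) * wg (theta_reg h d (2*m+n) n)
         = phi h \<alpha> ws wg (d * m, d * n)"
proof -
  have N: "norm3 (sreg h d (2*m+n) n) = nq h (d * m, d * n)"
  proof -
    have "sreg h d (2*m+n) n = (d * m + d * n / 2, (d * n) * sqrt 3 / 2, h)"
      unfolding sreg_def by (simp add: field_simps)
    then show ?thesis unfolding nq_def by simp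
  qed
  define r where "r = nq h (d * of_int m, d * of_int n)"
  have r: "r \<ge> h" unfolding r_def by (rule nq_ge[OF h])
  have y: "0 \<le> h / r" "h / r \<le> 1" using r h by auto
  show ?thesis
    unfolding theta_reg_def N phi_def r_def[symmetric] Wc_eq[OF y] by simp
qed

lemma bij_lattice: "bij_betw (\<lambda>(m::int, n::int). (2*m+n, n)) (UNIV - {(0,0)}) Iset"
proof (rule bij_betw_byWitness[where f' = "\<lambda>(i::int, j::int). ((i - j) div 2, j)"])
  show "\<forall>a\<in>UNIV - {(0::int, 0::int)}. (\<lambda>(i::int, j::int). ((i - j) div 2, j)) ((\<lambda>(m::int, n::int). (2 * m + n, n)) a) = a" by auto
  show "\<forall>a'\<in>Iset. (\<lambda>(m::int, n::int). (2 * m + n, n)) ((\<lambda>(i::int, j::int). ((i - j) div 2, j)) a') = a'"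
    unfolding Iset_def by (auto; presburger)
  show "(\<lambda>(m::int, n::int). (2 * m + n, n)) ` (UNIV - {(0, 0)}) \<subseteq> Iset"
    unfolding Iset_def by (auto; presburger)
  show "(\<lambda>(i::int, j::int). ((i - j) div 2, j)) ` Iset \<subseteq> UNIV - {(0, 0)}"
    unfolding Iset_def by (auto; presburger)
qed

lemma iset_sum:
  assumes h: "h > 0"
  shows "(\<Sum>\<^sub>\<infinity>(i, j)\<in>Iset. norm3 (sreg h d i j) powr (- \<alpha>) * ws (theta_reg h d i j) * wg (theta_reg h d i j))
       = infsum (chi h \<alpha> ws wg d) UNIV"
proof -
  let ?F = "\<lambda>(i, j). norm3 (sreg h d i j) powr (- \<alpha>) * ws (theta_reg h d i j) * wg (theta_reg h d i j)"
  have "infsum ?F Iset = infsum (\<lambda>x. ?F ((\<lambda>(m::int, n::int). (2*m+n, n)) x)) (UNIV - {(0,0)})"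
    by (rule infsum_reindex_bij_betw[OF bij_lattice, symmetric])
  also have "\<dots> = infsum (chi h \<alpha> ws wg d) (UNIV - {(0,0)})"
    by (intro infsum_cong) (auto simp: chi_def summand_eq[OF h])
  also have "\<dots> = infsum (chi h \<alpha> ws wg d) UNIV"
    by (intro infsum_cong_neutral) (auto simp: chi_def)
  finally show ?thesis .
qed



lemma floor_lim:
  fixes x :: real and d :: "'a \<Rightarrow> real"
  assumes d0: "(d \<longlongrightarrow> 0) F" and dp: "\<forall>\<^sub>F t in F. d t > 0"
  shows "((\<lambda>t. d t * \<lfloor>x / d t\<rfloor>) \<longlongrightarrow> x) F"
proof (rule tendsto_sandwich[where f = "\<lambda>t. x - d t" and h = "\<lambda>t. x"])
  show "\<forall>\<^sub>F t in F. x - d t \<le> d t * \<lfloor>x / d t\<rfloor>"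
    using dp by eventually_elim (use fl_bounds in \<open>auto intro: less_imp_le\<close>)
  show "\<forall>\<^sub>F t in F. d t * \<lfloor>x / d t\<rfloor> \<le> x"
    using dp by eventually_elim (use fl_bounds in auto)
  show "((\<lambda>t. x - d t) \<longlongrightarrow> x) F" using tendsto_diff[OF tendsto_const d0] by simp
qed simp

lemma floor_nonzero:
  fixes x :: real and d :: "'a \<Rightarrow> real"
  assumes d0: "(d \<longlongrightarrow> 0) F" and dp: "\<forall>\<^sub>F t in F. d t > 0" and x: "x \<noteq> 0"
  shows "\<forall>\<^sub>F t in F. \<lfloor>x / d t\<rfloor> \<noteq> 0"
proof (cases "x > 0")
  case True
  have "\<forall>\<^sub>F t in F. d t < x" using order_tendstoD(2)[OF d0 True] .
  then show ?thesis using dp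
  proof eventually_elim
    case (elim t)
    then have "x / d t \<ge> 1" by simp
    then show ?case by linarith
  qed
next
  case False
  then have "x < 0" using x by simp
  from dp show ?thesis
  proof eventually_elim
    case (elim t)
    then have "x / d t < 0" using \<open>x < 0\<close> by (simp add: divide_neg_pos)
    then show ?case by linarith
  qed
qed

lemma phid_pointwise:
  assumes h: "h > 0" and cs: "continuous_on {0..pi/2} ws" and cg: "continuous_on {0..pi/2} wg"
    and d0: "(d \<longlongrightarrow> 0) F" and dp: "\<forall>\<^sub>F t in F. d t > 0" and x: "x \<noteq> (0,0)"
  shows "((\<lambda>t. phid h \<alpha> ws wg (d t) x) \<longlongrightarrow> phi h \<alpha> ws wg x) F"
proof -
  have ev: "\<forall>\<^sub>F t in F. (\<lfloor>fst x / d t\<rfloor>, \<lfloor>snd x / d t\<rfloor>) \<noteq> (0,0)"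
  proof (cases "fst x = 0")
    case True
    then have "snd x \<noteq> 0" using x by (cases x) auto
    from floor_nonzero[OF d0 dp this] show ?thesis by eventually_elim auto
  next
    case False
    from floor_nonzero[OF d0 dp this] show ?thesis by eventually_elim auto
  qed
  have y: "((\<lambda>t. (d t * \<lfloor>fst x / d t\<rfloor>, d t * \<lfloor>snd x / d t\<rfloor>)) \<longlongrightarrow> x) F"
    using tendsto_Pair[OF floor_lim[OF d0 dp, of "fst x"] floor_lim[OF d0 dp, of "snd x"]] by simp
  have "((\<lambda>t. phi h \<alpha> ws wg (d t * \<lfloor>fst x / d t\<rfloor>, d t * \<lfloor>snd x / d t\<rfloor>)) \<longlongrightarrow> phi h \<alpha> ws wg x) F"
    by (rule continuous_on_tendsto_compose[OF phi_cont[OF h cs cg] y]) auto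
  moreover have "\<forall>\<^sub>F t in F. phi h \<alpha> ws wg (d t * \<lfloor>fst x / d t\<rfloor>, d t * \<lfloor>snd x / d t\<rfloor>) = phid h \<alpha> ws wg (d t) x"
    using ev by eventually_elim (auto simp: phid_def)
  ultimately show ?thesis using tendsto_cong by fastforce
qed

lemma phi_meas:
  assumes h: "h > 0" and cs: "continuous_on {0..pi/2} ws" and cg: "continuous_on {0..pi/2} wg"
  shows "phi h \<alpha> ws wg \<in> borel_measurable (lborel :: (real\<times>real) measure)"
  using borel_measurable_continuous_onI[OF phi_cont[OF h cs cg]] by simp

lemma lim_int:
  assumes h: "h > 0" and a: "\<alpha> > 2" and cs: "continuous_on {0..pi/2} ws" and cg: "continuous_on {0..pi/2} wg"
    and ws: "\<forall>t\<in>{0..pi/2}. 0 \<le> ws t \<and> ws t \<le> 1" and wg: "\<forall>t\<in>{0..pi/2}. 0 \<le> wg t \<and> wg t \<le> 1"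
  shows "((\<lambda>d. integral\<^sup>L lborel (phid h \<alpha> ws wg d)) \<longlongrightarrow> integral\<^sup>L lborel (phi h \<alpha> ws wg)) (at_right 0)"
proof -
  define dd where "dd = (\<lambda>t::real. inverse (max 1 t))"
  have ddp: "0 < dd t" "dd t \<le> 1" for t unfolding dd_def by (auto simp: inverse_le_1_iff)
  have dd0: "(dd \<longlongrightarrow> 0) at_top"
  proof -
    have "((\<lambda>t::real. inverse t) \<longlongrightarrow> 0) at_top" by (rule tendsto_inverse_0_at_top[OF filterlim_ident])
    then show ?thesis unfolding dd_def
      by (rule tendsto_cong[THEN iffD1, rotated]) (auto simp: eventually_at_top_linorder intro!: exI[of _ 1])
  qed
  have "((\<lambda>t. integral\<^sup>L lborel (phid h \<alpha> ws wg (dd t))) \<longlongrightarrow> integral\<^sup>L lborel (phi h \<alpha> ws wg)) at_top"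
  proof (rule integral_dominated_convergence_at_top[where w = "\<lambda>x. G1 h \<alpha> (fst x) * G1 h \<alpha> (snd x)"])
    show "phi h \<alpha> ws wg \<in> borel_measurable lborel" by (rule phi_meas[OF h cs cg])
    show "phid h \<alpha> ws wg (dd t) \<in> borel_measurable lborel" for t by (rule phid_meas[OF ddp(1)])
    show "integrable lborel (\<lambda>x. G1 h \<alpha> (fst x) * G1 h \<alpha> (snd x))" by (rule G2_int[OF a])
    show "AE x in lborel. ((\<lambda>t. phid h \<alpha> ws wg (dd t) x) \<longlongrightarrow> phi h \<alpha> ws wg x) at_top"
    proof -
      have evp: "\<forall>\<^sub>F t in at_top. 0 < dd t" using ddp by simp
      show ?thesis using AE_lborel_singleton[of "(0::real, 0::real)"]
        by eventually_elim (rule phid_pointwise[OF h cs cg dd0 evp])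
    qed
    show "\<forall>\<^sub>F t in at_top. AE x in lborel. norm (phid h \<alpha> ws wg (dd t) x) \<le> G1 h \<alpha> (fst x) * G1 h \<alpha> (snd x)"
      using dom_bound[OF h _ ws wg ddp] a by auto
  qed
  then have "((\<lambda>t. integral\<^sup>L lborel (phid h \<alpha> ws wg (inverse t))) \<longlongrightarrow> integral\<^sup>L lborel (phi h \<alpha> ws wg)) at_top"
    by (rule tendsto_cong[THEN iffD1, rotated]) (auto simp: eventually_at_top_linorder dd_def intro!: exI[of _ 1])
  then show ?thesis by (simp add: filterlim_at_right_to_top)
qed



lemma phi_integrable:
  assumes h: "h > 0" and a: "\<alpha> > 2" and cs: "continuous_on {0..pi/2} ws" and cg: "continuous_on {0..pi/2} wg"
    and ws: "\<forall>t\<in>{0..pi/2}. 0 \<le> ws t \<and> ws t \<le> 1" and wg: "\<forall>t\<in>{0..pi/2}. 0 \<le> wg t \<and> wg t \<le> 1"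
  shows "integrable lborel (phi h \<alpha> ws wg)"
proof -
  define dd where "dd = (\<lambda>t::real. inverse (max 1 t))"
  have ddp: "0 < dd t" "dd t \<le> 1" for t unfolding dd_def by (auto simp: inverse_le_1_iff)
  have dd0: "(dd \<longlongrightarrow> 0) at_top"
  proof -
    have "((\<lambda>t::real. inverse t) \<longlongrightarrow> 0) at_top" by (rule tendsto_inverse_0_at_top[OF filterlim_ident])
    then show ?thesis unfolding dd_def
      by (rule tendsto_cong[THEN iffD1, rotated]) (auto simp: eventually_at_top_linorder intro!: exI[of _ 1])
  qed
  show ?thesis
  proof (rule integrable_dominated_convergence_at_top[where w = "\<lambda>x. G1 h \<alpha> (fst x) * G1 h \<alpha> (snd x)"
        and s = "\<lambda>t. phid h \<alpha> ws wg (dd t)"])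
    show "phi h \<alpha> ws wg \<in> borel_measurable lborel" by (rule phi_meas[OF h cs cg])
    show "phid h \<alpha> ws wg (dd t) \<in> borel_measurable lborel" for t by (rule phid_meas[OF ddp(1)])
    show "integrable lborel (\<lambda>x. G1 h \<alpha> (fst x) * G1 h \<alpha> (snd x))" by (rule G2_int[OF a])
    show "AE x in lborel. ((\<lambda>t. phid h \<alpha> ws wg (dd t) x) \<longlongrightarrow> phi h \<alpha> ws wg x) at_top"
    proof -
      have evp: "\<forall>\<^sub>F t in at_top. 0 < dd t" using ddp by simp
      show ?thesis using AE_lborel_singleton[of "(0::real, 0::real)"]
        by eventually_elim (rule phid_pointwise[OF h cs cg dd0 evp])
    qed
    show "\<forall>\<^sub>F t in at_top. AE x in lborel. norm (phid h \<alpha> ws wg (dd t) x) \<le> G1 h \<alpha> (fst x) * G1 h \<alpha> (snd x)"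
      using dom_bound[OF h _ ws wg ddp] a by auto
  qed
qed

lemma I_pos:
  assumes h: "h > 0" and a: "\<alpha> > 2" and cs: "continuous_on {0..pi/2} ws" and cg: "continuous_on {0..pi/2} wg"
    and ws: "\<forall>t\<in>{0..pi/2}. 0 \<le> ws t \<and> ws t \<le> 1" and wg: "\<forall>t\<in>{0..pi/2}. 0 \<le> wg t \<and> wg t \<le> 1"
    and w0: "ws 0 = 1" "wg 0 = 1"
  shows "integral\<^sup>L lborel (phi h \<alpha> ws wg) > 0"
proof -
  define c where "c = h powr (-\<alpha>)"
  have cp: "c > 0" using h by (simp add: c_def)
  have op: "open {x. c/2 < phi h \<alpha> ws wg x}"
    by (rule open_Collect_less[OF continuous_on_const phi_cont[OF h cs cg]])
  have z: "(0::real,0::real) \<in> {x. c/2 < phi h \<alpha> ws wg x}" using phi_0[where h=h and ws=ws and wg=wg and \<alpha>=\<alpha>, OF h w0] cp by (simp add: c_def)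
  then obtain e where e: "e > 0" "ball (0,0) e \<subseteq> {x. c/2 < phi h \<alpha> ws wg x}"
    using op z unfolding open_contains_ball by blast
  define r where "r = e/2"
  have rp: "r > 0" using e by (simp add: r_def)
  define B where "B = {-r..r} \<times> {-r..r::real}"
  have Bsub: "B \<subseteq> ball (0,0) e"
  proof
    fix x assume "x \<in> B"
    then have "fst x ^ 2 \<le> r^2" "snd x ^ 2 \<le> r^2" unfolding B_def
      by (auto simp: abs_le_iff power2_le_iff_abs_le rp less_imp_le)
    then have "fst x ^ 2 + snd x ^ 2 < e ^ 2" unfolding r_def
    proof -
      assume a1: "fst x ^ 2 \<le> (e/2)^2" "snd x ^ 2 \<le> (e/2)^2"
      have "0 < e^2" using e by simp
      moreover have "fst x ^ 2 \<le> e^2/4" "snd x ^ 2 \<le> e^2/4" using a1 by (simp_all add: power_divide)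
      ultimately show "fst x ^ 2 + snd x ^ 2 < e ^ 2" by linarith
    qed
    then have "sqrt (fst x ^ 2 + snd x ^ 2) < e" using e real_sqrt_less_mono[of "fst x ^ 2 + snd x ^ 2" "e^2"] by simp
    then show "x \<in> ball (0,0) e" by (cases x) (simp add: dist_norm norm_Pair)
  qed
  have pnn: "0 \<le> phi h \<alpha> ws wg x" for x using phi_bounds[OF h _ ws wg] a by simp
  have int: "integrable lborel (phi h \<alpha> ws wg)" by (rule phi_integrable[OF h a cs cg ws wg])
  have BS: "B \<in> sets (lborel :: (real\<times>real) measure)" unfolding B_def by (simp flip: lborel_prod)
  have mB: "emeasure (lborel :: (real\<times>real) measure) B = ennreal ((2*r) * (2*r))"
    unfolding B_def
    apply (simp flip: lborel_prod)
    apply (subst sigma_finite_measure.emeasure_pair_measure_Times)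
    using rp by (auto simp: ennreal_mult sigma_finite_lborel mult_ac)
  have "ennreal (c/2) * emeasure lborel B = (\<integral>\<^sup>+x. ennreal (c/2) * indicator B x \<partial>lborel)"
    using BS by (simp add: nn_integral_cmult_indicator)
  also have "\<dots> \<le> (\<integral>\<^sup>+x. ennreal (phi h \<alpha> ws wg x) \<partial>lborel)"
  proof (rule nn_integral_mono)
    fix x show "ennreal (c/2) * indicator B x \<le> ennreal (phi h \<alpha> ws wg x)"
    proof (cases "x \<in> B")
      case True
      then have "c/2 < phi h \<alpha> ws wg x" using Bsub e(2) by auto
      then show ?thesis using True by (simp add: ennreal_leI)
    qed simp
  qed
  also have "\<dots> = ennreal (integral\<^sup>L lborel (phi h \<alpha> ws wg))"
    using int pnn by (simp add: nn_integral_eq_integral)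
  finally have X: "ennreal (c/2) * emeasure lborel B \<le> ennreal (integral\<^sup>L lborel (phi h \<alpha> ws wg))" .
  have Y: "ennreal (c/2) * emeasure lborel B = ennreal (c/2 * ((2*r) * (2*r)))"
    unfolding mB using cp rp by (intro ennreal_mult[symmetric]) auto
  have "ennreal (c/2 * ((2*r) * (2*r))) \<le> ennreal (integral\<^sup>L lborel (phi h \<alpha> ws wg))"
    using X unfolding Y .
  moreover have "c/2 * ((2*r) * (2*r)) > 0" using cp rp by simp
  ultimately show ?thesis
    by (metis ennreal_le_iff2 ennreal_less_zero_iff not_le order_less_le_trans)
qed



theorem proposition3:
  fixes h \<alpha> p \<sigma>2 :: real and ws wg :: "real \<Rightarrow> real"
  assumes "h > 0" and "\<alpha> > 2" and "p > 0" and "\<sigma>2 > 0"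
    and "continuous_on {0..pi/2} ws" and "continuous_on {0..pi/2} wg"
    and "\<forall>t\<in>{0..pi/2}. 0 \<le> ws t \<and> ws t \<le> 1"
    and "\<forall>t\<in>{0..pi/2}. 0 \<le> wg t \<and> wg t \<le> 1"
    and "ws 0 = 1" and "wg 0 = 1"
  shows "\<exists>L. 0 < L \<and> ((\<lambda>\<Delta>. R_reg \<sigma>2 h \<alpha> ws wg p \<Delta>) \<longlongrightarrow> L) (at_right 0)"
proof -
  note h = assms(1) and a = assms(2) and cs = assms(5) and cg = assms(6) and ws = assms(7) and wg = assms(8)
    and w0 = assms(9,10)
  define c0 where "c0 = p / \<sigma>2"
  define \<gamma> where "\<gamma> = gamma_snr \<sigma>2 h \<alpha> p"
  define I where "I = integral\<^sup>L lborel (phi h \<alpha> ws wg)"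
  define D where "D = (\<lambda>d. integral\<^sup>L lborel (phid h \<alpha> ws wg d))"
  define q where "q = (\<lambda>d. \<gamma> / (c0 * D d + d^2))"
  define x where "x = (\<lambda>d. d^2 * q d)"
  define L where "L = 2 / sqrt 3 * (\<gamma> / (c0 * I)) * 1 / ln 2"
  have c0p: "c0 > 0" using assms(3,4) by (simp add: c0_def)
  have gp: "\<gamma> > 0" using assms(1,3,4) by (simp add: \<gamma>_def gamma_snr_def)
  have Ip: "I > 0" unfolding I_def by (rule I_pos[OF h a cs cg ws wg w0])
  have Lp: "L > 0" using c0p gp Ip by (simp add: L_def)
  have DI: "(D \<longlongrightarrow> I) (at_right 0)" unfolding D_def I_def by (rule lim_int[OF h a cs cg ws wg])
  have ev01: "\<forall>\<^sub>F d in at_right (0::real). d \<in> {0<..<1}" by (rule eventually_at_right_real) simp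
  have Dnn: "D d \<ge> 0" if "d > 0" "d \<le> 1" for d
  proof -
    have "0 \<le> phid h \<alpha> ws wg d y" for y using dom_bound[OF h _ ws wg that] a by auto
    then show ?thesis unfolding D_def by simp
  qed
  have qlim: "(q \<longlongrightarrow> \<gamma> / (c0 * I)) (at_right 0)"
  proof -
    have "((\<lambda>d. c0 * D d + d^2) \<longlongrightarrow> c0 * I + 0^2) (at_right 0)"
      by (intro tendsto_intros DI)
    then show ?thesis unfolding q_def using c0p Ip by (auto intro!: tendsto_intros)
  qed
  have xlim: "(x \<longlongrightarrow> 0) (at_right 0)"
  proof -
    have "((\<lambda>d. d^2 * q d) \<longlongrightarrow> 0^2 * (\<gamma> / (c0 * I))) (at_right 0)"
      by (intro tendsto_intros qlim)
    then show ?thesis unfolding x_def by simp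
  qed
  have xpos: "\<forall>\<^sub>F d in at_right 0. x d > 0"
    using ev01
  proof eventually_elim
    case (elim d)
    then have "c0 * D d + d^2 > 0" using Dnn[of d] c0p by (auto intro!: add_nonneg_pos)
    then show ?case using elim gp by (simp add: x_def q_def)
  qed
  have lnlim: "((\<lambda>d. ln (1 + x d) / x d) \<longlongrightarrow> 1) (at_right 0)"
  proof -
    have "filterlim x (at 0) (at_right 0)"
      by (rule filterlim_atI[OF xlim]) (use xpos in \<open>eventually_elim, simp\<close>)
    from filterlim_compose[OF lim_ln_1_plus_x_over_x_at_0 this] show ?thesis by simp
  qed
  have lim: "((\<lambda>d. 2 / sqrt 3 * q d * (ln (1 + x d) / x d) / ln 2) \<longlongrightarrow> L) (at_right 0)"
  proof -
    have "((\<lambda>d. 2 / sqrt 3 * q d * (ln (1 + x d) / x d) / ln 2) \<longlongrightarrow> 2 / sqrt 3 * (\<gamma> / (c0 * I)) * 1 / ln 2) (at_right 0)"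
      by (intro tendsto_intros qlim lnlim) simp
    then show ?thesis by (simp add: L_def)
  qed
  have ev: "\<forall>\<^sub>F d in at_right 0. 2 / sqrt 3 * q d * (ln (1 + x d) / x d) / ln 2 = R_reg \<sigma>2 h \<alpha> ws wg p d"
    using ev01 xpos
  proof eventually_elim
    case (elim d)
    then have d: "0 < d" "d \<le> 1" by auto
    have den: "c0 * D d + d^2 > 0" using Dnn[OF d] c0p d by (auto intro!: add_nonneg_pos)
    have T: "D d = d^2 * infsum (chi h \<alpha> ws wg d) UNIV"
      unfolding D_def by (rule sum_identity[OF h a ws wg d])
    have eta: "eta_int \<sigma>2 h \<alpha> ws wg p d = c0 * (D d / d^2)"
      unfolding eta_int_def iset_sum[OF h] c0_def using T d by simp
    have g: "gamma_snr \<sigma>2 h \<alpha> p / (eta_int \<sigma>2 h \<alpha> ws wg p d + 1) = x d"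
      unfolding eta \<gamma>_def[symmetric] x_def q_def using d den by (simp add: field_simps)
    have "R_reg \<sigma>2 h \<alpha> ws wg p d = 2 / (d^2 * sqrt 3) * (ln (1 + x d) / ln 2)"
      unfolding R_reg_def g by (simp add: log_def)
    also have "\<dots> = 2 / sqrt 3 * q d * (ln (1 + x d) / x d) / ln 2"
    proof -
      have qp: "q d > 0" using den gp by (simp add: q_def)
      have alg: "2/(d^2 * sqrt 3) * (y / ln 2) = 2/sqrt 3 * Q * (y/(d^2 * Q))/ln 2" if "Q > 0" for Q y :: real
        using d that by (simp add: field_simps)
      show ?thesis using alg[OF qp, of "ln (1 + x d)"] by (simp add: x_def)
    qed
    finally show ?case by simp
  qed
  have "((\<lambda>d. R_reg \<sigma>2 h \<alpha> ws wg p d) \<longlongrightarrow> L) (at_right 0)"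
    using tendsto_cong[OF ev] lim by simp
  then show ?thesis using Lp by blast
qed

end
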